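(* Let $\mathbb{S}^n\subset\mathbb{R}^{n+1}$ be the unit round sphere, $o\in\mathbb{S}^n$, $1\le k\le n-1$, $E$ a $(k+1)$-dimensional linear subspace of $\mathbb{R}^{n+1}$ containing $o$, $\mathbb{S}^k_o=\mathbb{S}^n\cap E$ and $\mathbb{S}^{n-k-1}=\mathbb{S}^n\cap E^\perp$. Let $X_k\subset\mathbb{S}^k_o$ be a $k$-dimensional geodesically convex set, centrally symmetric around $o$ and containing $o$, contained in the open hemisphere $\mathbb{S}^k_{+}$ of $\mathbb{S}^k_o$ centered at $o$, and let $X_n=X_k*\mathbb{S}^{n-k-1}=\{\cos(t)u+\sin(t)v: u\in X_k,\ v\in\mathbb{S}^{n-k-1},\ t\in[0,\pi/2]\}$. Then $$\frac{\mathrm{vol}_n(X_n)}{\mathrm{vol}_n(\mathbb{S}^n_{+})}=\frac{\mathrm{vol}_k(X_k)}{\mathrm{vol}_k(\mathbb{S}^k_{+})},$$ where $\mathbb{S}^n_+$ is the open hemisphere of $\mathbb{S}^n$ centered at $o$.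
   Context: $\mathrm{vol}_j$ denotes $j$-dimensional Riemannian volume. Geodesic convexity: any two points are joined by a minimizing geodesic segment inside the set. Central symmetry around $o$: invariance under the geodesic reflection of the sphere at $o$. *)

theory Defs
  imports "HOL-Analysis.Analysis"
begin

definition sph_dist :: "'a::euclidean_space \<Rightarrow> 'a \<Rightarrow> real" where
  "sph_dist x y = arccos (x \<bullet> y)"

definition min_geodesic :: "(real \<Rightarrow> 'a::euclidean_space) \<Rightarrow> 'a \<Rightarrow> 'a \<Rightarrow> bool" where
  "min_geodesic \<gamma> x y \<longleftrightarrow> \<gamma> 0 = x \<and> \<gamma> 1 = y \<and> (\<forall>t\<in>{0..1}. \<gamma> t \<in> sphere 0 1) \<and>
     (\<forall>s\<in>{0..1}. \<forall>t\<in>{0..1}. sph_dist (\<gamma> s) (\<gamma> t) = \<bar>s - t\<bar> * sph_dist x y)"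

definition geod_convex :: "'a::euclidean_space set \<Rightarrow> bool" where
  "geod_convex X \<longleftrightarrow> X \<subseteq> sphere 0 1 \<and>
     (\<forall>x\<in>X. \<forall>y\<in>X. \<exists>\<gamma>. min_geodesic \<gamma> x y \<and> \<gamma> ` {0..1} \<subseteq> X)"

definition sph_reflect :: "'a::euclidean_space \<Rightarrow> 'a \<Rightarrow> 'a" where
  "sph_reflect o' x = (2 * (x \<bullet> o')) *\<^sub>R o' - x"

text \<open>Riemannian volume of a subset A of the unit sphere of a Euclidean space of
  dimension m+1, via the cone identity vol_m(A) = (m+1) * Lebesgue measure of the cone
  {t x : 0 \<le> t \<le> 1, x \<in> A}.\<close>
definition sph_cone :: "'a::euclidean_space set \<Rightarrow> 'a set" where
  "sph_cone A = {t *\<^sub>R x | t x. 0 \<le> t \<and> t \<le> 1 \<and> x \<in> A}"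

definition sph_vol :: "'a::euclidean_space set \<Rightarrow> real" where
  "sph_vol A = real DIM('a) * measure lebesgue (sph_cone A)"

definition open_hemisphere :: "'a::euclidean_space set \<Rightarrow> 'a \<Rightarrow> 'a set" where
  "open_hemisphere S o' = {x \<in> sphere 0 1 \<inter> S. x \<bullet> o' > 0}"

definition sph_join :: "'a::euclidean_space set \<Rightarrow> 'a set \<Rightarrow> 'a set" where
  "sph_join X Y = {cos t *\<^sub>R u + sin t *\<^sub>R v | t u v. u \<in> X \<and> v \<in> Y \<and> t \<in> {0..pi/2}}"

end

theory Submission
  imports Defs "HOL-Probability.Distributions"
begin


lemma lborel_translate_nn:
  fixes c :: "'a::euclidean_space"
  assumes [measurable]: "h \<in> borel_measurable borel"
  shows "(\<integral>\<^sup>+x. h (x + c) \<partial>lborel) = (\<integral>\<^sup>+x. h x \<partial>lborel)"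
proof -
  have e: "distr lborel borel (\<lambda>x. c + x) = (lborel :: 'a measure)"
    using lborel_affine[of 1 c] by (simp add: density_1)
  have "(\<integral>\<^sup>+x. h x \<partial>lborel) = (\<integral>\<^sup>+x. h x \<partial>distr lborel borel (\<lambda>x. c + x))"
    by (simp add: e)
  also have "\<dots> = (\<integral>\<^sup>+x. h (c + x) \<partial>lborel)"
    by (rule nn_integral_distr) auto
  finally show ?thesis by (simp add: add.commute)
qed

lemma lborel_neg_nn:
  fixes h :: "'a::euclidean_space \<Rightarrow> ennreal"
  assumes [measurable]: "h \<in> borel_measurable borel"
  shows "(\<integral>\<^sup>+x. h (- x) \<partial>lborel) = (\<integral>\<^sup>+x. h x \<partial>lborel)"
proof -
  have e0: "(lborel :: 'a measure) = distr lborel borel uminus"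
    using lborel_affine[of "-1" 0] by (simp add: density_1)
  note e = e0[symmetric]
  have "(\<integral>\<^sup>+x. h x \<partial>lborel) = (\<integral>\<^sup>+x. h x \<partial>distr lborel borel uminus)"
    by (simp add: e)
  also have "\<dots> = (\<integral>\<^sup>+x. h (- x) \<partial>lborel)"
    by (rule nn_integral_distr) auto
  finally show ?thesis by simp
qed

lemma emeasure_cone_scale:
  fixes K :: "'a::euclidean_space set"
  assumes K[measurable]: "K \<in> sets borel" and cone: "\<And>c x. c > 0 \<Longrightarrow> c *\<^sub>R x \<in> K \<longleftrightarrow> x \<in> K"
    and t: "t > 0"
  shows "emeasure lborel (K \<inter> cball 0 t) = ennreal (t ^ DIM('a)) * emeasure lborel (K \<inter> cball 0 1)"
proof -
  have e: "lborel = density (distr lborel borel (\<lambda>x::'a. t *\<^sub>R x)) (\<lambda>_. ennreal (t ^ DIM('a)))"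
    using lborel_affine[of t 0] t by simp
  have pre: "(*\<^sub>R) t -` K \<inter> (*\<^sub>R) t -` cball 0 t = K \<inter> cball 0 1"
    using t cone by (auto simp: mem_cball dist_norm)
  have "emeasure lborel (K \<inter> cball 0 t) = emeasure (density (distr lborel borel (\<lambda>x::'a. t *\<^sub>R x)) (\<lambda>_. ennreal (t ^ DIM('a)))) (K \<inter> cball 0 t)"
    by (subst e) simp
  also have "\<dots> = ennreal (t ^ DIM('a)) * emeasure (distr lborel borel (\<lambda>x::'a. t *\<^sub>R x)) (K \<inter> cball 0 t)"
    by (simp add: emeasure_density nn_integral_cmult_indicator)
  also have "\<dots> = ennreal (t ^ DIM('a)) * emeasure lborel (K \<inter> cball 0 1)"
    by (subst emeasure_distr) (auto simp: pre)
  finally show ?thesis .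
qed

definition gam :: "'a::euclidean_space set \<Rightarrow> ennreal" where
  "gam K = (\<integral>\<^sup>+y. indicator K y * ennreal (exp (- (norm y ^ 2))) \<partial>lborel)"

definition cdim :: "nat \<Rightarrow> ennreal" where
  "cdim d = (\<integral>\<^sup>+t. ennreal (2 * t^(d+1) * exp (-(t^2))) * indicator {0..} t \<partial>lborel)"

lemma exp_FTC:
  fixes a :: real assumes a: "0 \<le> a"
  shows "ennreal (exp (-(a^2))) = (\<integral>\<^sup>+t. ennreal (2 * t * exp (-(t^2))) * indicator {a..} t \<partial>lborel)"
proof -
  have "(\<integral>\<^sup>+t. ennreal (2 * t * exp (-(t^2))) * indicator {a..} t \<partial>lborel) = ennreal (0 - (- exp (-(a^2))))"
  proof (rule nn_integral_FTC_atLeast)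
    show "(\<lambda>t::real. 2 * t * exp (-(t^2))) \<in> borel_measurable borel" by measurable
    show "DERIV (\<lambda>t. - exp (-(t^2))) x :> 2 * x * exp (-(x^2))" for x :: real
      by (auto intro!: derivative_eq_intros simp: power2_eq_square)
    show "0 \<le> 2 * x * exp (-(x^2))" if "a \<le> x" for x using that a by simp
    have "filterlim (\<lambda>t::real. t^2) at_top at_top"
      by (intro filterlim_pow_at_top filterlim_ident) auto
    then have "filterlim (\<lambda>t::real. -(t^2)) at_bot at_top"
      by (simp add: filterlim_uminus_at_bot)
    then have "((\<lambda>t::real. exp (-(t^2))) \<longlongrightarrow> 0) at_top"
      by (rule filterlim_compose[OF exp_at_bot])
    then show "((\<lambda>t::real. - exp (-(t^2))) \<longlongrightarrow> 0) at_top"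
      using tendsto_minus by fastforce
  qed
  then show ?thesis by simp
qed

lemma gam_cone:
  fixes K :: "'a::euclidean_space set"
  assumes K[measurable]: "K \<in> sets borel" and cone: "\<And>c x. c > 0 \<Longrightarrow> c *\<^sub>R x \<in> K \<longleftrightarrow> x \<in> K"
  shows "gam K = cdim DIM('a) * emeasure lborel (K \<inter> cball 0 1)"
proof -
  let ?d = "DIM('a)"
  let ?mu = "emeasure lborel (K \<inter> cball 0 1)"
  have "gam K = (\<integral>\<^sup>+y. (\<integral>\<^sup>+t. indicator K y * (ennreal (2 * t * exp (-(t^2))) * indicator {norm y..} t) \<partial>lborel) \<partial>lborel)"
    unfolding gam_def
    by (subst nn_integral_cmult) (auto simp: exp_FTC)
  also have "\<dots> = (\<integral>\<^sup>+t. (\<integral>\<^sup>+y. indicator K y * (ennreal (2 * t * exp (-(t^2))) * indicator {norm y..} t) \<partial>lborel) \<partial>lborel)"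
  proof (rule lborel_pair.Fubini'[symmetric])
    have "(\<lambda>(y::'a, t::real). indicator K y * (ennreal (2 * t * exp (-(t^2))) * indicator {norm y..} t))
       = (\<lambda>p. indicator K (fst p) * (ennreal (2 * snd p * exp (-((snd p)^2))) * indicator {p. norm (fst p) \<le> snd p} p))"
      by (auto simp: fun_eq_iff split: split_indicator)
    moreover have "(\<lambda>p. indicator K (fst p) * (ennreal (2 * snd p * exp (-((snd p)^2))) * indicator {p::'a\<times>real. norm (fst p) \<le> snd p} p)) \<in> borel_measurable (lborel \<Otimes>\<^sub>M lborel)"
      by measurable
    ultimately show "(\<lambda>(y::'a, t::real). indicator K y * (ennreal (2 * t * exp (-(t^2))) * indicator {norm y..} t)) \<in> borel_measurable (lborel \<Otimes>\<^sub>M lborel)"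
      by simp
  qed
  also have "\<dots> = (\<integral>\<^sup>+t. ennreal (2 * t * exp (-(t^2))) * emeasure lborel (K \<inter> cball 0 t) \<partial>lborel)"
  proof (rule nn_integral_cong)
    fix t :: real
    have "(\<lambda>y. indicator K y * (ennreal (2 * t * exp (-(t^2))) * indicator {norm y..} t))
        = (\<lambda>y. ennreal (2 * t * exp (-(t^2))) * indicator (K \<inter> cball 0 t) y)"
      by (auto simp: fun_eq_iff split: split_indicator)
    then show "(\<integral>\<^sup>+y. indicator K y * (ennreal (2 * t * exp (-(t^2))) * indicator {norm y..} t) \<partial>lborel) =
        ennreal (2 * t * exp (-(t^2))) * emeasure lborel (K \<inter> cball 0 t)"
      by (simp add: nn_integral_cmult_indicator)
  qed
  also have "\<dots> = (\<integral>\<^sup>+t. (ennreal (2 * t^(?d+1) * exp (-(t^2))) * indicator {0..} t) * ?mu \<partial>lborel)"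
  proof (rule nn_integral_cong)
    fix t :: real
    show "ennreal (2 * t * exp (-(t^2))) * emeasure lborel (K \<inter> cball 0 t) =
       (ennreal (2 * t^(?d+1) * exp (-(t^2))) * indicator {0..} t) * ?mu"
    proof (cases "t > 0")
      case True
      have 1: "ennreal (2 * t * exp (-(t^2))) * ennreal (t^?d) = ennreal (2 * t^(?d+1) * exp (-(t^2)))"
      proof -
        have "ennreal (2 * t * exp (-(t^2))) * ennreal (t^?d) = ennreal (2 * t * exp (-(t^2)) * t^?d)"
          using True by (intro ennreal_mult[symmetric]) auto
        also have "2 * t * exp (-(t^2)) * t^?d = 2 * t^(?d+1) * exp (-(t^2))"
          by (simp add: power_Suc)
        finally show ?thesis .
      qed
      have "ennreal (2 * t * exp (-(t^2))) * emeasure lborel (K \<inter> cball 0 t)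
          = ennreal (2 * t * exp (-(t^2))) * (ennreal (t^?d) * ?mu)"
        by (simp only: emeasure_cone_scale[OF K cone True])
      also have "\<dots> = (ennreal (2 * t * exp (-(t^2))) * ennreal (t^?d)) * ?mu"
        by (simp only: mult.assoc)
      also have "\<dots> = (ennreal (2 * t^(?d+1) * exp (-(t^2))) * indicator {0..} t) * ?mu"
        using True by (simp only: 1) simp
      finally show ?thesis .
    next
      case False
      then show ?thesis
      proof (cases "t = 0")
        case True
        have "emeasure lborel (K \<inter> cball 0 t) \<le> emeasure lborel {0::'a}"
          using True by (intro emeasure_mono) auto
        then show ?thesis using True by simp
      next
        case False
        with \<open>\<not> t > 0\<close> show ?thesis by (simp add: ennreal_neg)
      qed
    qed
  qed
  also have "\<dots> = cdim ?d * ?mu"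
    unfolding cdim_def by (rule nn_integral_multc) measurable
  finally show ?thesis .
qed



lemma iso_inner:
  fixes f :: "'k::euclidean_space \<Rightarrow> 'n::euclidean_space"
  assumes lin: "linear f" and iso: "\<And>x. norm (f x) = norm x"
  shows "f x \<bullet> f y = x \<bullet> y"
proof -
  have h: "norm (f x + f y) = norm (x + y)"
    using iso[of "x + y"] linear_add[OF lin, of x y] by simp
  have "f x \<bullet> f y = ((norm (f x + f y))\<^sup>2 - (norm (f x))\<^sup>2 - (norm (f y))\<^sup>2) / 2"
    by (rule dot_norm)
  also have "\<dots> = ((norm (x + y))\<^sup>2 - (norm x)\<^sup>2 - (norm y)\<^sup>2) / 2"
    by (simp only: h iso)
  also have "\<dots> = x \<bullet> y" by (rule dot_norm[symmetric])
  finally show ?thesis .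
qed

lemma adj_f:
  fixes f :: "'k::euclidean_space \<Rightarrow> 'n::euclidean_space"
  assumes lin: "linear f" and iso: "\<And>x. norm (f x) = norm x"
  shows "adjoint f (f x) = x"
proof -
  have e: "y \<bullet> adjoint f (f x) = y \<bullet> x" for y
    using adjoint_works[OF lin, of y "f x"] iso_inner[OF lin iso, of y x] by simp
  have "(adjoint f (f x) - x) \<bullet> (adjoint f (f x) - x) = 0"
    using e[of "adjoint f (f x) - x"] by (simp only: inner_diff_right)
  then show ?thesis by simp
qed

lemma adj_meas:
  fixes f :: "'k::euclidean_space \<Rightarrow> 'n::euclidean_space"
  assumes lin: "linear f"
  shows "adjoint f \<in> borel_measurable borel" "f \<in> borel_measurable borel"
proof -
  have "bounded_linear (adjoint f)" "bounded_linear f"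
    using adjoint_linear[OF lin] lin by (simp_all only: linear_conv_bounded_linear)
  then show "adjoint f \<in> borel_measurable borel" "f \<in> borel_measurable borel"
    by (simp_all add: borel_measurable_continuous_onI linear_continuous_on)
qed

lemma norm_identity:
  fixes f :: "'k::euclidean_space \<Rightarrow> 'n::euclidean_space"
  assumes lin: "linear f" and iso: "\<And>x. norm (f x) = norm x"
  shows "norm z ^ 2 + norm x ^ 2 = norm (adjoint f z) ^ 2 + norm (z - f (adjoint f z) + f x) ^ 2"
proof -
  let ?g = "adjoint f"
  have orth: "f y \<bullet> (z - f (?g z)) = 0" for y
    by (simp add: inner_diff_right adjoint_works[OF lin, symmetric] adj_f[OF lin iso])
  have "norm z ^ 2 = norm (f (?g z) + (z - f (?g z))) ^ 2" by simp
  also have "\<dots> = norm (f (?g z)) ^ 2 + norm (z - f (?g z)) ^ 2"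
    by (rule norm_add_Pythagorean) (simp add: orthogonal_def orth)
  also have "\<dots> = norm (?g z) ^ 2 + norm (z - f (?g z)) ^ 2"
    by (simp add: iso)
  finally have 1: "norm z ^ 2 = norm (?g z) ^ 2 + norm (z - f (?g z)) ^ 2" .
  have 2: "norm (z - f (?g z) + f x) ^ 2 = norm (z - f (?g z)) ^ 2 + norm x ^ 2"
    using norm_add_Pythagorean[of "z - f (?g z)" "f x"] orth[of x]
    by (simp add: orthogonal_def inner_commute iso)
  show ?thesis using 1 2 by simp
qed

lemma gam_pullback:
  fixes f :: "'k::euclidean_space \<Rightarrow> 'n::euclidean_space"
  assumes lin: "linear f" and iso: "\<And>x. norm (f x) = norm x" and K[measurable]: "K \<in> sets borel"
  shows "gam (adjoint f -` K) * gam (UNIV::'k set) = gam K * gam (UNIV::'n set)"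
proof -
  let ?g = "adjoint f"
  note [measurable] = adj_meas[OF lin]
  have gl: "linear ?g" by (rule adjoint_linear[OF lin])
  define Psi where "Psi = (\<lambda>(y::'k) (w::'n). indicator K y * ennreal (exp (- (norm y ^ 2 + norm w ^ 2))))"
  have Psi_m[measurable]: "(\<lambda>p. Psi (a p) (b p)) \<in> borel_measurable M"
    if [measurable]: "a \<in> borel_measurable M" "b \<in> borel_measurable M" for a b and M :: "'z measure"
    unfolding Psi_def by measurable
  have ex: "ennreal (exp (- (a + b))) = ennreal (exp (- a)) * ennreal (exp (- b))" for a b :: real
    by (simp add: ennreal_mult[symmetric] exp_add[symmetric])
  have ex2: "ennreal (exp (- a - b)) = ennreal (exp (- a)) * ennreal (exp (- b))" for a b :: real
    using ex[of a b] by simp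
  have "gam (?g -` K) * gam (UNIV::'k set) =
      (\<integral>\<^sup>+x. (\<integral>\<^sup>+z. indicator K (?g z) * ennreal (exp (- (norm z ^ 2 + norm (x::'k) ^ 2))) \<partial>lborel) \<partial>lborel)"
  proof -
    have m1: "(\<lambda>x::'k. ennreal (exp (- (norm x ^ 2)))) \<in> borel_measurable lborel" by measurable
    have m2: "(\<lambda>z::'n. indicator (?g -` K) z * ennreal (exp (- (norm z ^ 2)))) \<in> borel_measurable lborel"
      by measurable
    have "gam (?g -` K) * gam (UNIV::'k set) = gam (?g -` K) * (\<integral>\<^sup>+x. ennreal (exp (- (norm (x::'k) ^ 2))) \<partial>lborel)"
      unfolding gam_def[of "UNIV::'k set"] by simp
    also have "\<dots> = (\<integral>\<^sup>+x. gam (?g -` K) * ennreal (exp (- (norm (x::'k) ^ 2))) \<partial>lborel)"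
      by (rule nn_integral_cmult[OF m1, symmetric])
    also have "\<dots> = (\<integral>\<^sup>+x. (\<integral>\<^sup>+z. indicator (?g -` K) z * ennreal (exp (- (norm z ^ 2))) * ennreal (exp (- (norm (x::'k) ^ 2))) \<partial>lborel) \<partial>lborel)"
      unfolding gam_def[of "?g -` K"] by (rule nn_integral_cong) (rule nn_integral_multc[OF m2, symmetric])
    also have "\<dots> = (\<integral>\<^sup>+x. (\<integral>\<^sup>+z. indicator K (?g z) * ennreal (exp (- (norm z ^ 2 + norm (x::'k) ^ 2))) \<partial>lborel) \<partial>lborel)"
      by (intro nn_integral_cong) (simp only: ex indicator_vimage mult.assoc)
    finally show ?thesis .
  qed
  also have "\<dots> = (\<integral>\<^sup>+x. (\<integral>\<^sup>+z. Psi (?g z - x) (z - f (?g z) + f x) \<partial>lborel) \<partial>lborel)"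
  proof (rule nn_integral_cong)
    fix x :: 'k
    have "(\<integral>\<^sup>+z. indicator K (?g z) * ennreal (exp (- (norm z ^ 2 + norm x ^ 2))) \<partial>lborel)
        = (\<integral>\<^sup>+z. indicator K (?g (z + - f x)) * ennreal (exp (- (norm (z + - f x) ^ 2 + norm x ^ 2))) \<partial>lborel)"
      by (rule lborel_translate_nn[of "\<lambda>z. indicator K (?g z) * ennreal (exp (- (norm z ^ 2 + norm x ^ 2)))" "- f x", symmetric]) measurable
    also have "\<dots> = (\<integral>\<^sup>+z. Psi (?g z - x) (z - f (?g z) + f x) \<partial>lborel)"
    proof (rule nn_integral_cong)
      fix z :: 'n
      have "norm (z + - f x) ^ 2 + norm x ^ 2 = norm (?g z - x) ^ 2 + norm (z - f (?g z) + f x) ^ 2"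
        using norm_identity[OF lin iso, of "z + - f x" x]
        by (simp add: linear_diff[OF gl] linear_diff[OF lin] adj_f[OF lin iso] algebra_simps)
      then show "indicator K (?g (z + - f x)) * ennreal (exp (- (norm (z + - f x) ^ 2 + norm x ^ 2))) =
          Psi (?g z - x) (z - f (?g z) + f x)"
        unfolding Psi_def by (simp add: linear_diff[OF gl] adj_f[OF lin iso])
    qed
    finally show "(\<integral>\<^sup>+z. indicator K (?g z) * ennreal (exp (- (norm z ^ 2 + norm x ^ 2))) \<partial>lborel)
        = (\<integral>\<^sup>+z. Psi (?g z - x) (z - f (?g z) + f x) \<partial>lborel)" .
  qed
  also have "\<dots> = (\<integral>\<^sup>+z. (\<integral>\<^sup>+x. Psi (?g z - x) (z - f (?g z) + f x) \<partial>lborel) \<partial>lborel)"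
    by (rule lborel_pair.Fubini') measurable
  also have "\<dots> = (\<integral>\<^sup>+z. (\<integral>\<^sup>+x. Psi (- x) (z + f x) \<partial>lborel) \<partial>lborel)"
  proof (rule nn_integral_cong)
    fix z :: 'n
    have "(\<integral>\<^sup>+x. Psi (- x) (z + f x) \<partial>lborel) = (\<integral>\<^sup>+x. Psi (- (x + - ?g z)) (z + f (x + - ?g z)) \<partial>lborel)"
      by (rule lborel_translate_nn[of "\<lambda>x. Psi (- x) (z + f x)" "- ?g z", symmetric]) (rule Psi_m, measurable)
    also have "\<dots> = (\<integral>\<^sup>+x. Psi (?g z - x) (z - f (?g z) + f x) \<partial>lborel)"
      by (simp add: linear_diff[OF lin] linear_add[OF lin] linear_neg[OF lin] algebra_simps)
    finally show "(\<integral>\<^sup>+x. Psi (?g z - x) (z - f (?g z) + f x) \<partial>lborel) = (\<integral>\<^sup>+x. Psi (- x) (z + f x) \<partial>lborel)"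
      by simp
  qed
  also have "\<dots> = (\<integral>\<^sup>+x. (\<integral>\<^sup>+z. Psi (- x) (z + f x) \<partial>lborel) \<partial>lborel)"
    by (rule lborel_pair.Fubini'[symmetric]) measurable
  also have "\<dots> = (\<integral>\<^sup>+x. (\<integral>\<^sup>+z. Psi (- x) z \<partial>lborel) \<partial>lborel)"
  proof (rule nn_integral_cong)
    fix x :: 'k
    show "(\<integral>\<^sup>+z. Psi (- x) (z + f x) \<partial>lborel) = (\<integral>\<^sup>+z. Psi (- x) z \<partial>lborel)"
      by (rule lborel_translate_nn[of "\<lambda>z. Psi (- x) z" "f x"]) (rule Psi_m, measurable)
  qed
  also have "\<dots> = (\<integral>\<^sup>+x. indicator K (- x) * ennreal (exp (- (norm x ^ 2))) * gam (UNIV::'n set) \<partial>lborel)"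
  proof (rule nn_integral_cong)
    fix x :: 'k
    have m3: "(\<lambda>z::'n. ennreal (exp (- (norm z ^ 2)))) \<in> borel_measurable lborel" by measurable
    have "(\<integral>\<^sup>+z. Psi (- x) z \<partial>lborel) = (\<integral>\<^sup>+z. (indicator K (- x) * ennreal (exp (- (norm x ^ 2)))) * ennreal (exp (- (norm (z::'n) ^ 2))) \<partial>lborel)"
      unfolding Psi_def by (rule nn_integral_cong) (simp add: ex2 mult.assoc)
    also have "\<dots> = indicator K (- x) * ennreal (exp (- (norm x ^ 2))) * gam (UNIV::'n set)"
      unfolding gam_def by (subst nn_integral_cmult[OF m3]) simp
    finally show "(\<integral>\<^sup>+z. Psi (- x) z \<partial>lborel) = indicator K (- x) * ennreal (exp (- (norm x ^ 2))) * gam (UNIV::'n set)" .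
  qed
  also have "\<dots> = (\<integral>\<^sup>+x. indicator K x * ennreal (exp (- (norm x ^ 2))) \<partial>lborel) * gam (UNIV::'n set)"
  proof -
    have neg: "(\<integral>\<^sup>+x. indicator K (- x) * ennreal (exp (- (norm x ^ 2))) \<partial>lborel) = (\<integral>\<^sup>+x. indicator K x * ennreal (exp (- (norm (x::'k) ^ 2))) \<partial>lborel)"
      using lborel_neg_nn[of "\<lambda>x::'k. indicator K x * ennreal (exp (- (norm x ^ 2)))"] by simp
    have m: "(\<lambda>x::'k. indicator K (- x) * ennreal (exp (- (norm x ^ 2)))) \<in> borel_measurable lborel"
      by measurable
    show ?thesis using nn_integral_multc[OF m, of "gam (UNIV::'n set)"] neg by simp
  qed
  finally show ?thesis unfolding gam_def .
qed



lemma cdim_pos_fin: "0 < cdim d" "cdim d < \<infinity>"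
proof -
  let ?F = "\<lambda>x::real. indicator {0..} x *\<^sub>R (exp (-x\<^sup>2) * x^(d+1))"
  have "\<exists>v>0. has_bochner_integral lborel ?F v"
  proof -
    have "d+1 = 2*((d+1) div 2) \<or> d+1 = 2*((d+1) div 2)+1" by presburger
    then obtain k where "d+1 = 2*k \<or> d+1 = 2*k+1" by blast
    then show ?thesis
    proof
      assume h: "d+1 = 2*k"
      have "has_bochner_integral lborel ?F ((sqrt pi / 2) * (fact (2 * k) / (2 ^ (2 * k) * fact k)))"
        using gaussian_moment_even_pos[of k] h by simp
      moreover have "(sqrt pi / 2) * (fact (2 * k) / (2 ^ (2 * k) * fact k)) > (0::real)"
        by simp
      ultimately show ?thesis by blast
    next
      assume h: "d+1 = 2*k+1"
      have "has_bochner_integral lborel ?F (fact k / 2)"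
        using gaussian_moment_odd_pos[of k] h by simp
      moreover have "fact k / 2 > (0::real)" by simp
      ultimately show ?thesis by blast
    qed
  qed
  then obtain v where v: "v > 0" and hb: "has_bochner_integral lborel ?F v" by blast
  have int: "integrable lborel ?F" using has_bochner_integral_iff[THEN iffD1, OF hb] by (rule conjunct1)
  have val: "integral\<^sup>L lborel ?F = v" using has_bochner_integral_iff[THEN iffD1, OF hb] by (rule conjunct2)
  have nn: "(\<integral>\<^sup>+x. ennreal (?F x) \<partial>lborel) = ennreal v"
    using nn_integral_eq_integral[OF int] val by (simp add: indicator_def)
  have "cdim d = (\<integral>\<^sup>+x. 2 * ennreal (?F x) \<partial>lborel)"
    unfolding cdim_def
  proof (rule nn_integral_cong)
    fix t :: real
    show "ennreal (2 * t^(d+1) * exp (-(t^2))) * indicator {0..} t = 2 * ennreal (?F t)"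
    proof (cases "t \<ge> 0")
      case True
      have "ennreal (2 * (t^(d+1) * exp (-(t^2)))) = ennreal 2 * ennreal (t^(d+1) * exp (-(t^2)))"
        using True by (intro ennreal_mult) auto
      then show ?thesis using True by (simp add: mult_ac)
    qed simp
  qed
  also have "\<dots> = 2 * (\<integral>\<^sup>+x. ennreal (?F x) \<partial>lborel)"
    by (rule nn_integral_cmult) measurable
  also have "\<dots> = 2 * ennreal v" by (simp only: nn)
  finally have c0: "cdim d = 2 * ennreal v" .
  have c: "cdim d = ennreal (2 * v)" using c0 v by (simp add: ennreal_mult)
  show "0 < cdim d" "cdim d < \<infinity>" unfolding c using v by (auto simp: ennreal_mult_less_top)
qed

lemma key_emeasure:
  fixes f :: "'k::euclidean_space \<Rightarrow> 'n::euclidean_space"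
  assumes lin: "linear f" and iso: "\<And>x. norm (f x) = norm x"
    and K[measurable]: "K \<in> sets borel" and cone: "\<And>c x. c > 0 \<Longrightarrow> c *\<^sub>R x \<in> K \<longleftrightarrow> x \<in> K"
  shows "emeasure lborel (adjoint f -` K \<inter> cball 0 1) * emeasure lborel (cball (0::'k) 1)
       = emeasure lborel (K \<inter> cball 0 1) * emeasure lborel (cball (0::'n) 1)"
proof -
  note [measurable] = adj_meas[OF lin]
  have gK: "adjoint f -` K \<in> sets borel"
    using measurable_sets[OF adj_meas(1)[OF lin] K] by simp
  have gc: "c *\<^sub>R x \<in> adjoint f -` K \<longleftrightarrow> x \<in> adjoint f -` K" if "c > 0" for c x
    using cone[OF that] by (simp add: linear_cmul[OF adjoint_linear[OF lin]])
  have U1: "(UNIV::'k set) \<in> sets borel" "\<And>c x. c > 0 \<Longrightarrow> c *\<^sub>R x \<in> (UNIV::'k set) \<longleftrightarrow> x \<in> UNIV" by auto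
  have U2: "(UNIV::'n set) \<in> sets borel" "\<And>c x. c > 0 \<Longrightarrow> c *\<^sub>R x \<in> (UNIV::'n set) \<longleftrightarrow> x \<in> UNIV" by auto
  have e: "gam (adjoint f -` K) * gam (UNIV::'k set) = gam K * gam (UNIV::'n set)"
    by (rule gam_pullback[OF lin iso K])
  have g1: "gam (adjoint f -` K) = cdim DIM('n) * emeasure lborel (adjoint f -` K \<inter> cball 0 1)"
    by (rule gam_cone[OF gK gc])
  have g2: "gam (UNIV::'k set) = cdim DIM('k) * emeasure lborel (cball (0::'k) 1)"
    using gam_cone[OF U1] by simp
  have g3: "gam K = cdim DIM('k) * emeasure lborel (K \<inter> cball 0 1)"
    by (rule gam_cone[OF K cone])
  have g4: "gam (UNIV::'n set) = cdim DIM('n) * emeasure lborel (cball (0::'n) 1)"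
    using gam_cone[OF U2] by simp
  have "(cdim DIM('n) * cdim DIM('k)) * (emeasure lborel (adjoint f -` K \<inter> cball 0 1) * emeasure lborel (cball (0::'k) 1))
     = (cdim DIM('n) * cdim DIM('k)) * (emeasure lborel (K \<inter> cball 0 1) * emeasure lborel (cball (0::'n) 1))"
    using e by (simp only: g1 g2 g3 g4 ac_simps)
  moreover have "cdim DIM('n) * cdim DIM('k) \<noteq> 0" "cdim DIM('n) * cdim DIM('k) \<noteq> top"
    using cdim_pos_fin[of "DIM('n)"] cdim_pos_fin[of "DIM('k)"]
    by (auto simp: ennreal_mult_eq_top_iff)
  ultimately show ?thesis by (simp add: ennreal_mult_cancel_left)
qed




definition pcone :: "'a::euclidean_space set \<Rightarrow> 'a set" where
  "pcone A = {c *\<^sub>R a | c a. 0 < c \<and> a \<in> A}"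

lemma unit_inner_bound:
  fixes x y :: "'a::euclidean_space"
  assumes "norm x = 1" "norm y = 1"
  shows "-1 \<le> x \<bullet> y" "x \<bullet> y \<le> 1"
  using Cauchy_Schwarz_ineq2[of x y] assms by auto

lemma trig_id: "sin (A::real) ^ 2 + sin B ^ 2 + 2 * sin A * sin B * cos (A + B) = sin (A + B) ^ 2"
proof -
  have a: "sin A ^ 2 + cos A ^ 2 = 1" by simp
  have b: "sin B ^ 2 + cos B ^ 2 = 1" by simp
  show ?thesis unfolding sin_add cos_add using a b by algebra
qed

lemma geod_arc:
  fixes u1 u2 :: "'a::euclidean_space"
  assumes n: "norm u1 = 1" "norm u2 = 1" and mg: "min_geodesic \<gamma> u1 u2"
    and t: "0 \<le> t" "t \<le> 1" and d: "d = arccos (u1 \<bullet> u2)"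
  shows "sin d *\<^sub>R \<gamma> t = sin ((1-t)*d) *\<^sub>R u1 + sin (t*d) *\<^sub>R u2"
proof -
  define z where "z = \<gamma> t"
  have g0: "\<gamma> 0 = u1" and g1: "\<gamma> 1 = u2" and sph: "\<gamma> t \<in> sphere 0 1"
    and ds: "\<And>s r. s \<in> {0..1} \<Longrightarrow> r \<in> {0..1} \<Longrightarrow> sph_dist (\<gamma> s) (\<gamma> r) = \<bar>s - r\<bar> * sph_dist u1 u2"
    using mg t unfolding min_geodesic_def by auto
  have nz: "norm z = 1" using sph unfolding z_def by simp
  have "arccos (u1 \<bullet> z) = t * d"
    using ds[of 0 t] t g0 unfolding z_def sph_dist_def d by simp
  then have c1: "u1 \<bullet> z = cos (t * d)"
    using unit_inner_bound[OF n(1) nz] by (metis cos_arccos)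
  have "arccos (z \<bullet> u2) = (1 - t) * d"
    using ds[of t 1] t g1 unfolding z_def sph_dist_def d by simp
  then have c2: "z \<bullet> u2 = cos ((1 - t) * d)"
    using unit_inner_bound[OF nz n(2)] by (metis cos_arccos)
  have c0: "u1 \<bullet> u2 = cos d"
    using unit_inner_bound[OF n] d by simp
  define s1 where "s1 = sin ((1-t)*d)"
  define s2 where "s2 = sin (t*d)"
  define v where "v = s1 *\<^sub>R u1 + s2 *\<^sub>R u2"
  have dd: "(1 - t) * d + t * d = d" by (simp add: algebra_simps)
  have zv: "z \<bullet> v = sin d"
  proof -
    have "z \<bullet> v = s1 * cos (t * d) + cos ((1 - t) * d) * s2"
      unfolding v_def using c1 c2 by (simp add: inner_add_right inner_commute)
    also have "\<dots> = sin ((1 - t) * d + t * d)"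
      unfolding s1_def s2_def sin_add by simp
    finally show ?thesis using dd by simp
  qed
  have vv: "v \<bullet> v = sin d ^ 2"
  proof -
    have uu: "u1 \<bullet> u1 = 1" "u2 \<bullet> u2 = 1" using n by (simp_all add: power2_norm_eq_inner[symmetric])
    have "v \<bullet> v = s1 ^ 2 + s2 ^ 2 + 2 * s1 * s2 * cos ((1 - t) * d + t * d)"
      unfolding v_def using uu c0 dd
      by (simp add: inner_add_left inner_add_right inner_commute power2_eq_square algebra_simps)
    also have "\<dots> = sin ((1 - t) * d + t * d) ^ 2"
      unfolding s1_def s2_def by (rule trig_id)
    finally show ?thesis using dd by simp
  qed
  have zz: "z \<bullet> z = 1" using nz by (simp add: power2_norm_eq_inner[symmetric])
  have "(sin d *\<^sub>R z - v) \<bullet> (sin d *\<^sub>R z - v) = 0"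
    using zv vv zz
    by (simp add: inner_diff_left inner_diff_right inner_commute power2_eq_square algebra_simps)
  then have "sin d *\<^sub>R z = v" by simp
  then show ?thesis unfolding z_def v_def s1_def s2_def .
qed

lemma geod_cone:
  fixes X :: "'a::euclidean_space set"
  assumes X: "geod_convex X" and pos: "\<And>x. x \<in> X \<Longrightarrow> 0 < x \<bullet> o'"
    and u: "u1 \<in> X" "u2 \<in> X" and ab: "0 < \<alpha>" "0 < \<beta>"
  shows "\<exists>l>0. \<exists>w\<in>X. \<alpha> *\<^sub>R u1 + \<beta> *\<^sub>R u2 = l *\<^sub>R w"
proof -
  have Xs: "X \<subseteq> sphere 0 1" using X unfolding geod_convex_def by auto
  then have n: "norm u1 = 1" "norm u2 = 1" using u by auto
  obtain \<gamma> where mg: "min_geodesic \<gamma> u1 u2" and sub: "\<gamma> ` {0..1} \<subseteq> X"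
    using X u unfolding geod_convex_def by blast
  have uu: "u1 \<bullet> u1 = 1" "u2 \<bullet> u2 = 1" using n by (simp_all add: power2_norm_eq_inner[symmetric])
  define d where "d = arccos (u1 \<bullet> u2)"
  consider "u1 \<bullet> u2 = 1" | "u1 \<bullet> u2 = -1" | "-1 < u1 \<bullet> u2 \<and> u1 \<bullet> u2 < 1"
    using unit_inner_bound[OF n] by linarith
  then show ?thesis
  proof cases
    case 1
    have "(u1 - u2) \<bullet> (u1 - u2) = 0" using 1 uu by (simp add: inner_diff_left inner_diff_right inner_commute)
    then have "u1 = u2" by simp
    then have "\<alpha> *\<^sub>R u1 + \<beta> *\<^sub>R u2 = (\<alpha> + \<beta>) *\<^sub>R u1" by (simp add: scaleR_add_left)
    then show ?thesis using ab u by (intro exI[of _ "\<alpha> + \<beta>"]) auto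
  next
    case 2
    have "(u1 + u2) \<bullet> (u1 + u2) = 0" using 2 uu by (simp add: inner_add_left inner_add_right inner_commute)
    then have "u2 = - u1" by (simp add: add_eq_0_iff)
    then have False using pos[OF u(1)] pos[OF u(2)] by simp
    then show ?thesis ..
  next
    case 3
    have d0: "0 < d" "d < pi" using arccos_lt_bounded[of "u1 \<bullet> u2"] 3 unfolding d_def by auto
    have sd: "sin d > 0" using d0 by (simp add: sin_gt_zero)
    define phi where "phi = (\<lambda>t. \<alpha> * sin (t * d) - \<beta> * sin ((1 - t) * d))"
    have "continuous_on {0..1} phi" unfolding phi_def by (intro continuous_intros)
    moreover have "phi 0 \<le> 0" "0 \<le> phi 1" using sd ab unfolding phi_def by auto
    ultimately obtain t where t: "0 \<le> t" "t \<le> 1" "phi t = 0"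
      using IVT'[of phi 0 0 1] by auto
    have "t \<noteq> 0" using t(3) sd ab unfolding phi_def by (auto)
    have "t \<noteq> 1" using t(3) sd ab unfolding phi_def by (auto)
    have s1: "sin ((1 - t) * d) > 0"
    proof (rule sin_gt_zero)
      show "0 < (1 - t) * d" using t \<open>t \<noteq> 1\<close> d0 by simp
      have "t * d \<ge> 0" using t d0 by simp
      then show "(1 - t) * d < pi" using d0 by (simp add: left_diff_distrib)
    qed
    have ar: "sin d *\<^sub>R \<gamma> t = sin ((1-t)*d) *\<^sub>R u1 + sin (t*d) *\<^sub>R u2"
      by (rule geod_arc[OF n mg t(1,2) d_def])
    have eq: "\<alpha> * sin (t * d) = \<beta> * sin ((1 - t) * d)" using t(3) unfolding phi_def by simp
    have "\<alpha> *\<^sub>R u1 + \<beta> *\<^sub>R u2 = (\<alpha> / sin ((1-t)*d)) *\<^sub>R (sin ((1-t)*d) *\<^sub>R u1 + sin (t*d) *\<^sub>R u2)"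
    proof -
      have "\<beta> = \<alpha> / sin ((1-t)*d) * sin (t*d)" using eq s1 by (simp add: field_simps)
      then show ?thesis using s1 by (simp add: scaleR_add_right)
    qed
    also have "\<dots> = (\<alpha> * sin d / sin ((1-t)*d)) *\<^sub>R \<gamma> t"
      unfolding ar[symmetric] by simp
    finally have "\<alpha> *\<^sub>R u1 + \<beta> *\<^sub>R u2 = (\<alpha> * sin d / sin ((1-t)*d)) *\<^sub>R \<gamma> t" .
    moreover have "\<alpha> * sin d / sin ((1-t)*d) > 0" using ab sd s1 by simp
    moreover have "\<gamma> t \<in> X" using sub t by auto
    ultimately show ?thesis by blast
  qed
qed



lemma key_measure:
  fixes f :: "'k::euclidean_space \<Rightarrow> 'n::euclidean_space"
  assumes lin: "linear f" and iso: "\<And>x. norm (f x) = norm x"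
    and K: "K \<in> sets borel" and cone: "\<And>c x. c > 0 \<Longrightarrow> c *\<^sub>R x \<in> K \<longleftrightarrow> x \<in> K"
  shows "measure lebesgue (adjoint f -` K \<inter> cball 0 1) * measure lebesgue (cball (0::'k) 1)
       = measure lebesgue (K \<inter> cball 0 1) * measure lebesgue (cball (0::'n) 1)"
proof -
  have gK: "adjoint f -` K \<in> sets borel"
    using measurable_sets[OF adj_meas(1)[OF lin] K] by simp
  have s1: "adjoint f -` K \<inter> cball 0 1 \<in> sets lborel" using gK by simp
  have s2: "K \<inter> cball 0 1 \<in> sets lborel" using K by simp
  have "enn2real (emeasure lborel (adjoint f -` K \<inter> cball 0 1) * emeasure lborel (cball (0::'k) 1))
       = enn2real (emeasure lborel (K \<inter> cball 0 1) * emeasure lborel (cball (0::'n) 1))"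
    using key_emeasure[OF lin iso K cone] by simp
  then show ?thesis
    using s1 s2 by (simp add: enn2real_mult measure_def[symmetric])
qed

lemma pcone_scale:
  assumes c: "0 < c"
  shows "c *\<^sub>R x \<in> pcone A \<longleftrightarrow> x \<in> pcone A"
proof
  assume "c *\<^sub>R x \<in> pcone A"
  then obtain b a where e: "c *\<^sub>R x = b *\<^sub>R a" "0 < b" "a \<in> A" by (auto simp: pcone_def)
  have "x = (b / c) *\<^sub>R a"
  proof -
    have "x = (1 / c) *\<^sub>R (c *\<^sub>R x)" using c by simp
    also have "\<dots> = (b / c) *\<^sub>R a" using e by simp
    finally show ?thesis .
  qed
  moreover have "0 < b / c" using e c by simp
  ultimately show "x \<in> pcone A" using e(3) unfolding pcone_def by blast
next
  assume "x \<in> pcone A"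
  then obtain b a where e: "x = b *\<^sub>R a" "0 < b" "a \<in> A" by (auto simp: pcone_def)
  then have "c *\<^sub>R x = (c * b) *\<^sub>R a" by simp
  moreover have "0 < c * b" using e c by simp
  ultimately show "c *\<^sub>R x \<in> pcone A" using e(3) unfolding pcone_def by blast
qed

lemma sph_cone_pcone:
  fixes A :: "'a::euclidean_space set"
  assumes A: "A \<subseteq> sphere 0 1"
  shows "sph_cone A - {0} = pcone A \<inter> cball 0 1 - {0}"
proof
  show "sph_cone A - {0} \<subseteq> pcone A \<inter> cball 0 1 - {0}"
  proof
    fix x assume "x \<in> sph_cone A - {0}"
    then obtain t a where x: "x = t *\<^sub>R a" "0 \<le> t" "t \<le> 1" "a \<in> A" "x \<noteq> 0"
      unfolding sph_cone_def by auto
    have na: "norm a = 1" using A x(4) by auto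
    have "t \<noteq> 0" using x by auto
    then have "0 < t" using x by simp
    then show "x \<in> pcone A \<inter> cball 0 1 - {0}"
      using x na unfolding pcone_def by auto
  qed
  show "pcone A \<inter> cball 0 1 - {0} \<subseteq> sph_cone A - {0}"
  proof
    fix x assume "x \<in> pcone A \<inter> cball 0 1 - {0}"
    then obtain t a where x: "x = t *\<^sub>R a" "0 < t" "a \<in> A" "norm x \<le> 1" "x \<noteq> 0"
      unfolding pcone_def by auto
    have na: "norm a = 1" using A x(3) by auto
    then have "t \<le> 1" using x by simp
    moreover have "0 \<le> t" using x by simp
    ultimately have "x \<in> sph_cone A" using x(1,3) unfolding sph_cone_def by blast
    then show "x \<in> sph_cone A - {0}" using x by blast
  qed
qed

lemma measure_sph_cone:
  fixes A :: "'a::euclidean_space set"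
  assumes A: "A \<subseteq> sphere 0 1" and m: "pcone A \<inter> cball 0 1 \<in> lmeasurable"
  shows "measure lebesgue (sph_cone A) = measure lebesgue (pcone A \<inter> cball 0 1)"
proof (rule measure_negligible_symdiff[OF m])
  have "pcone A \<inter> cball 0 1 - sph_cone A \<union> (sph_cone A - pcone A \<inter> cball 0 1) \<subseteq> {0}"
    using sph_cone_pcone[OF A] by blast
  then show "negligible (pcone A \<inter> cball 0 1 - sph_cone A \<union> (sph_cone A - pcone A \<inter> cball 0 1))"
    by (rule negligible_subset[OF negligible_sing])
qed

lemma pcone_half:
  fixes p :: "'a::euclidean_space"
  shows "pcone {x. norm x = 1 \<and> 0 < x \<bullet> p} = {x. 0 < x \<bullet> p}"
proof
  show "pcone {x. norm x = 1 \<and> 0 < x \<bullet> p} \<subseteq> {x. 0 < x \<bullet> p}"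
    unfolding pcone_def by auto
  show "{x. 0 < x \<bullet> p} \<subseteq> pcone {x. norm x = 1 \<and> 0 < x \<bullet> p}"
  proof
    fix x assume x: "x \<in> {x. 0 < x \<bullet> p}"
    then have "x \<noteq> 0" by auto
    then have n: "norm x > 0" by simp
    have "x = norm x *\<^sub>R ((1 / norm x) *\<^sub>R x)" using n by simp
    moreover have "norm ((1 / norm x) *\<^sub>R x) = 1" using n by simp
    moreover have "0 < ((1 / norm x) *\<^sub>R x) \<bullet> p" using n x by simp
    ultimately show "x \<in> pcone {x. norm x = 1 \<and> 0 < x \<bullet> p}"
      unfolding pcone_def using n by blast
  qed
qed

lemma cone_interior:
  fixes S :: "'a::euclidean_space set"
  assumes cone: "\<And>c x. c > 0 \<Longrightarrow> c *\<^sub>R x \<in> S \<longleftrightarrow> x \<in> S" and c: "c > 0"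
  shows "c *\<^sub>R x \<in> interior S \<longleftrightarrow> x \<in> interior S"
proof -
  have imp: "d *\<^sub>R y \<in> interior S" if "y \<in> interior S" "d > 0" for d y
  proof -
    have "(*\<^sub>R) d ` interior S \<subseteq> S" using cone[OF \<open>d > 0\<close>] interior_subset by blast
    moreover have "open ((*\<^sub>R) d ` interior S)" using \<open>d > 0\<close> by (intro open_scaling) auto
    ultimately have "(*\<^sub>R) d ` interior S \<subseteq> interior S" by (rule interior_maximal)
    then show ?thesis using that by blast
  qed
  show ?thesis
  proof
    assume "c *\<^sub>R x \<in> interior S"
    from imp[OF this, of "1/c"] c show "x \<in> interior S" by simp
  qed (rule imp[OF _ c])
qed

lemma cone_closure:
  fixes S :: "'a::euclidean_space set"
  assumes cone: "\<And>c x. c > 0 \<Longrightarrow> c *\<^sub>R x \<in> S \<longleftrightarrow> x \<in> S" and c: "c > 0"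
  shows "c *\<^sub>R x \<in> closure S \<longleftrightarrow> x \<in> closure S"
proof -
  have imp: "d *\<^sub>R y \<in> closure S" if "y \<in> closure S" "d > 0" for d y
  proof -
    have eq: "(*\<^sub>R) d ` S = S"
    proof
      show "(*\<^sub>R) d ` S \<subseteq> S" using cone[OF \<open>d > 0\<close>] by blast
      show "S \<subseteq> (*\<^sub>R) d ` S"
      proof
        fix z assume "z \<in> S"
        then have "(1/d) *\<^sub>R z \<in> S" using cone[of "1/d" z] \<open>d > 0\<close> by simp
        moreover have "z = d *\<^sub>R ((1/d) *\<^sub>R z)" using \<open>d > 0\<close> by simp
        ultimately show "z \<in> (*\<^sub>R) d ` S" by blast
      qed
    qed
    have "d *\<^sub>R y \<in> (*\<^sub>R) d ` closure S" using that by blast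
    then show ?thesis using closure_scaleR[of d S] eq by simp
  qed
  show ?thesis
  proof
    assume "c *\<^sub>R x \<in> closure S"
    from imp[OF this, of "1/c"] c show "x \<in> closure S" by simp
  qed (rule imp[OF _ c])
qed




theorem mainTheorem2:
  fixes f :: "'k::euclidean_space \<Rightarrow> 'n::euclidean_space"
    and E :: "'n set" and o' :: 'n and Xk :: "'n set"
  assumes k_ge: "2 \<le> DIM('k)"
    and k_le: "DIM('k) + 1 \<le> DIM('n)"
    and f_lin: "linear f"
    and f_isom: "\<And>x. norm (f x) = norm x"
    and E_def: "E = range f"
    and o_sph: "o' \<in> sphere 0 1"
    and o_E: "o' \<in> E"
    and Xk_sub: "Xk \<subseteq> sphere 0 1 \<inter> E"
    and Xk_dim: "\<exists>x\<in>Xk. \<exists>e>0. ball x e \<inter> sphere 0 1 \<inter> E \<subseteq> Xk"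
    and Xk_conv: "geod_convex Xk"
    and Xk_symm: "sph_reflect o' ` Xk = Xk"
    and o_Xk: "o' \<in> Xk"
    and Xk_hemi: "Xk \<subseteq> open_hemisphere E o'"
  shows "sph_vol (sph_join Xk (sphere 0 1 \<inter> {v. \<forall>e\<in>E. v \<bullet> e = 0}))
           / sph_vol (open_hemisphere UNIV o')
         = sph_vol (f -` Xk) / sph_vol (f -` open_hemisphere E o')"
proof -
  define g where "g = adjoint f"
  have gl: "linear g" unfolding g_def by (rule adjoint_linear[OF f_lin])
  have gf: "\<And>x. g (f x) = x" unfolding g_def by (rule adj_f[OF f_lin f_isom])
  have adj: "\<And>x z. f x \<bullet> z = x \<bullet> g z" unfolding g_def using adjoint_works[OF f_lin] by simp
  have fE: "\<And>z. z \<in> E \<Longrightarrow> f (g z) = z" using E_def gf by auto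
  have fE_in: "\<And>x. f x \<in> E" using E_def by auto
  define ob where "ob = g o'"
  have fob: "f ob = o'" unfolding ob_def using fE[OF o_E] .
  have o_norm: "norm o' = 1" using o_sph by simp
  have nob: "norm ob = 1" using f_isom[of ob] fob o_norm by simp
  have o_ne: "o' \<noteq> 0" using o_norm by auto
  have Xk_pos: "\<And>x. x \<in> Xk \<Longrightarrow> 0 < x \<bullet> o'" using Xk_hemi unfolding open_hemisphere_def by auto
  have Xk_E: "\<And>x. x \<in> Xk \<Longrightarrow> x \<in> E" using Xk_sub by auto
  have Xk_n: "\<And>x. x \<in> Xk \<Longrightarrow> norm x = 1" using Xk_sub by auto
  define Sp where "Sp = sphere (0::'n) 1 \<inter> {v. \<forall>e\<in>E. v \<bullet> e = 0}"
  define Y where "Y = f -` Xk"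
  have Ysph: "Y \<subseteq> sphere 0 1"
  proof
    fix x assume "x \<in> Y"
    then have "norm (f x) = 1" using Xk_n unfolding Y_def by auto
    then show "x \<in> sphere 0 1" using f_isom[of x] by simp
  qed
  define C where "C = pcone Y"
  define H where "H = {y::'k. 0 < y \<bullet> ob}"
  have Ccone: "\<And>c x. c > 0 \<Longrightarrow> c *\<^sub>R x \<in> C \<longleftrightarrow> x \<in> C" unfolding C_def by (rule pcone_scale)
  have Hcone: "\<And>c x. c > 0 \<Longrightarrow> c *\<^sub>R x \<in> H \<longleftrightarrow> x \<in> H" unfolding H_def by (simp add: zero_less_mult_iff)
  have Hconv: "convex H" unfolding H_def using convex_halfspace_gt[of 0 ob] by (simp add: inner_commute)
  have Hopen: "open H" unfolding H_def using open_halfspace_gt[of 0 ob] by (simp add: inner_commute)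
  have Cconv: "convex C"
  proof (rule convexI)
    fix x y :: 'k and u v :: real assume xC: "x \<in> C" and yC: "y \<in> C" and uv0: "0 \<le> u" "0 \<le> v" "u + v = 1"
    then have uv: "0 \<le> u \<and> 0 \<le> v \<and> u + v = 1" by simp
    obtain a y1 where x: "x = a *\<^sub>R y1" "0 < a" "f y1 \<in> Xk" using xC unfolding C_def pcone_def Y_def by auto
    obtain b y2 where y: "y = b *\<^sub>R y2" "0 < b" "f y2 \<in> Xk" using yC unfolding C_def pcone_def Y_def by auto
    show "u *\<^sub>R x + v *\<^sub>R y \<in> C"
    proof (cases "u = 0")
      case True then show ?thesis using uv yC by simp
    next
      case u0: False
      show ?thesis
      proof (cases "v = 0")
        case True then show ?thesis using uv xC by simp
      next
        case v0: False
        have al: "0 < u * a" "0 < v * b" using u0 v0 uv x y by simp_all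
        obtain l w where lw: "l > 0" "w \<in> Xk" "(u * a) *\<^sub>R f y1 + (v * b) *\<^sub>R f y2 = l *\<^sub>R w"
          using geod_cone[OF Xk_conv Xk_pos x(3) y(3) al] by blast
        have "f (u *\<^sub>R x + v *\<^sub>R y) = (u * a) *\<^sub>R f y1 + (v * b) *\<^sub>R f y2"
          using x y f_lin by (simp add: linear_add linear_cmul)
        also have "\<dots> = f (l *\<^sub>R g w)" using lw fE[OF Xk_E[OF lw(2)]] f_lin by (simp add: linear_cmul)
        finally have "u *\<^sub>R x + v *\<^sub>R y = l *\<^sub>R g w" using gf by metis
        moreover have "g w \<in> Y" unfolding Y_def using fE[OF Xk_E[OF lw(2)]] lw(2) by simp
        ultimately show ?thesis unfolding C_def pcone_def using lw(1) by blast
      qed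
    qed
  qed
  define rk where "rk = measure lebesgue (cball (0::'k) 1)"
  define rn where "rn = measure lebesgue (cball (0::'n) 1)"
  have rk_pos: "rk > 0" unfolding rk_def using content_cball_pos[of 1 "0::'k"] by simp
  have rn_pos: "rn > 0" unfolding rn_def using content_cball_pos[of 1 "0::'n"] by simp
  define a where "a = measure lebesgue (C \<inter> cball 0 1)"
  define b where "b = measure lebesgue (H \<inter> cball 0 1)"
  have Cm: "C \<inter> cball 0 1 \<in> lmeasurable"
    by (intro measurable_convex convex_Int Cconv convex_cball bounded_Int) auto
  have Cim: "interior C \<inter> cball 0 1 \<in> lmeasurable"
    by (intro measurable_convex convex_Int convex_interior Cconv convex_cball bounded_Int) auto
  have Ccm: "closure C \<inter> cball 0 1 \<in> lmeasurable"
    by (intro measurable_convex convex_Int convex_closure Cconv convex_cball bounded_Int) auto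
  have Hm: "H \<inter> cball 0 1 \<in> lmeasurable"
    by (intro measurable_convex convex_Int Hconv convex_cball bounded_Int) auto
  have fr: "negligible (frontier C)" by (rule negligible_convex_frontier[OF Cconv])
  have ai: "measure lebesgue (interior C \<inter> cball 0 1) = a"
    unfolding a_def
  proof (rule measure_negligible_symdiff[OF Cm])
    show "negligible (C \<inter> cball 0 1 - interior C \<inter> cball 0 1 \<union> (interior C \<inter> cball 0 1 - C \<inter> cball 0 1))"
      by (rule negligible_subset[OF fr]) (use interior_subset[of C] closure_subset[of C] in \<open>auto simp: frontier_def\<close>)
  qed
  have ac: "measure lebesgue (closure C \<inter> cball 0 1) = a"
    unfolding a_def
  proof (rule measure_negligible_symdiff[OF Cm])
    show "negligible (C \<inter> cball 0 1 - closure C \<inter> cball 0 1 \<union> (closure C \<inter> cball 0 1 - C \<inter> cball 0 1))"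
      by (rule negligible_subset[OF fr]) (use interior_subset[of C] closure_subset[of C] in \<open>auto simp: frontier_def\<close>)
  qed
  have ki: "measure lebesgue (g -` interior C \<inter> cball 0 1) * rk = measure lebesgue (interior C \<inter> cball 0 1) * rn"
    unfolding g_def rk_def rn_def
    by (rule key_measure[OF f_lin f_isom borel_open[OF open_interior] cone_interior[OF Ccone]])
  have kc: "measure lebesgue (g -` closure C \<inter> cball 0 1) * rk = measure lebesgue (closure C \<inter> cball 0 1) * rn"
    unfolding g_def rk_def rn_def
    by (rule key_measure[OF f_lin f_isom borel_closed[OF closed_closure] cone_closure[OF Ccone]])
  have kh: "measure lebesgue (g -` H \<inter> cball 0 1) * rk = b * rn"
    unfolding g_def rk_def rn_def b_def
    by (rule key_measure[OF f_lin f_isom borel_open[OF Hopen] Hcone])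
  define G where "G = g -` C \<inter> cball (0::'n) 1"
  have Gm: "G \<in> lmeasurable" unfolding G_def
    by (intro measurable_convex convex_Int convex_linear_vimage[OF gl] Cconv convex_cball bounded_Int) auto
  have Gim: "g -` interior C \<inter> cball 0 1 \<in> lmeasurable"
    by (intro measurable_convex convex_Int convex_linear_vimage[OF gl] convex_interior Cconv convex_cball bounded_Int) auto
  have Gcm: "g -` closure C \<inter> cball 0 1 \<in> lmeasurable"
    by (intro measurable_convex convex_Int convex_linear_vimage[OF gl] convex_closure Cconv convex_cball bounded_Int) auto
  have GHm: "g -` H \<inter> cball 0 1 \<in> lmeasurable"
    by (intro measurable_convex convex_Int convex_linear_vimage[OF gl] Hconv convex_cball bounded_Int) auto
  have mi: "measure lebesgue (g -` interior C \<inter> cball 0 1) = a * rn / rk"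
    using ki ai rk_pos by (simp add: eq_divide_eq)
  have mc: "measure lebesgue (g -` closure C \<inter> cball 0 1) = a * rn / rk"
    using kc ac rk_pos by (simp add: eq_divide_eq)
  have mh: "measure lebesgue (g -` H \<inter> cball 0 1) = b * rn / rk"
    using kh rk_pos by (simp add: eq_divide_eq)
  have le1: "measure lebesgue (g -` interior C \<inter> cball 0 1) \<le> measure lebesgue G"
    by (rule measure_mono_fmeasurable[OF _ fmeasurableD[OF Gim] Gm])
       (use interior_subset[of C] in \<open>auto simp: G_def\<close>)
  have le2: "measure lebesgue G \<le> measure lebesgue (g -` closure C \<inter> cball 0 1)"
    by (rule measure_mono_fmeasurable[OF _ fmeasurableD[OF Gm] Gcm])
       (use closure_subset[of C] in \<open>auto simp: G_def\<close>)
  have mG: "measure lebesgue G = a * rn / rk" using le1 le2 mi mc by linarith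
  obtain v0 where v0: "v0 \<in> Sp"
  proof -
    have "dim E \<le> dim (UNIV::'k set)" unfolding E_def by (rule dim_image_le[OF f_lin])
    then have "dim E < DIM('n)" using k_le by simp
    obtain x where x: "x \<noteq> 0" "\<And>y. y \<in> span E \<Longrightarrow> orthogonal x y"
      using orthogonal_to_subspace_exists[OF \<open>dim E < DIM('n)\<close>] by blast
    have "(1 / norm x) *\<^sub>R x \<in> Sp"
      unfolding Sp_def using x span_base[of _ E] by (auto simp: orthogonal_def)
    then show ?thesis by (rule that)
  qed
  have J1: "sph_cone (sph_join Xk Sp) \<subseteq> G \<union> {z. o' \<bullet> z = 0}"
  proof
    fix z assume "z \<in> sph_cone (sph_join Xk Sp)"
    then obtain s x where z: "z = s *\<^sub>R x" "0 \<le> s" "s \<le> 1" "x \<in> sph_join Xk Sp"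
      unfolding sph_cone_def by auto
    then obtain t u v where x: "x = cos t *\<^sub>R u + sin t *\<^sub>R v" "u \<in> Xk" "v \<in> Sp" "t \<in> {0..pi/2}"
      unfolding sph_join_def by auto
    have vE: "\<And>e. e \<in> E \<Longrightarrow> v \<bullet> e = 0" using x(3) unfolding Sp_def by auto
    have nv: "norm v = 1" using x(3) unfolding Sp_def by auto
    have nu: "norm u = 1" using Xk_n x(2) .
    have gv: "g v = 0"
    proof -
      have "g v \<bullet> g v = f (g v) \<bullet> v" by (simp add: adj)
      also have "\<dots> = 0" using vE[OF fE_in[of "g v"]] by (simp add: inner_commute)
      finally show ?thesis by simp
    qed
    have gu: "f (g u) = u" using fE[OF Xk_E[OF x(2)]] .
    have uv: "u \<bullet> v = 0" using vE[OF Xk_E[OF x(2)]] by (simp add: inner_commute)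
    have "norm x ^ 2 = norm (cos t *\<^sub>R u) ^ 2 + norm (sin t *\<^sub>R v) ^ 2"
      unfolding x(1) by (rule norm_add_Pythagorean) (simp add: orthogonal_def uv)
    also have "\<dots> = 1" using nu nv by (simp add: power_mult_distrib)
    finally have nx: "norm x = 1" using norm_ge_zero[of x] by (auto simp: power2_eq_1_iff)
    have gz: "g z = (s * cos t) *\<^sub>R g u"
      unfolding z(1) x(1) using gl gv by (simp add: linear_add linear_cmul)
    have ct: "0 \<le> cos t" using x(4) by (intro cos_ge_zero) auto
    show "z \<in> G \<union> {z. o' \<bullet> z = 0}"
    proof (cases "s * cos t > 0")
      case True
      have "g u \<in> Y" unfolding Y_def using gu x(2) by simp
      then have "g z \<in> C" unfolding C_def pcone_def using gz True by blast
      moreover have "norm z \<le> 1" using z nx by simp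
      ultimately show ?thesis unfolding G_def by simp
    next
      case False
      then have "s * cos t = 0" using z(2) ct by (simp add: less_le)
      then have "g z = 0" using gz by simp
      then have "o' \<bullet> z = 0" using adj[of ob z] fob by simp
      then show ?thesis by simp
    qed
  qed
  have J2: "G \<subseteq> sph_cone (sph_join Xk Sp)"
  proof
    fix z assume zG: "z \<in> G"
    then have zb: "norm z \<le> 1" and "g z \<in> C" unfolding G_def by auto
    then obtain c y where gz: "g z = c *\<^sub>R y" "0 < c" "y \<in> Y" unfolding C_def pcone_def by auto
    define u where "u = f y"
    have u: "u \<in> Xk" using gz(3) unfolding Y_def u_def by simp
    have nu: "norm u = 1" using Xk_n[OF u] .
    define q where "q = z - f (g z)"
    have fgz: "f (g z) = c *\<^sub>R u" unfolding u_def gz(1) using f_lin by (simp add: linear_cmul)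
    have gq: "g q = 0" unfolding q_def using gl gf by (simp add: linear_diff)
    have qE: "\<And>e. e \<in> E \<Longrightarrow> q \<bullet> e = 0"
    proof -
      fix e assume "e \<in> E"
      then obtain y' where "e = f y'" using E_def by auto
      then show "q \<bullet> e = 0" using adj[of y' q] gq by (simp add: inner_commute)
    qed
    have nfgz: "norm (f (g z)) = c" using fgz nu gz(2) by simp
    have "norm z ^ 2 = norm (f (g z) + q) ^ 2" unfolding q_def by simp
    also have "\<dots> = norm (f (g z)) ^ 2 + norm q ^ 2"
      by (rule norm_add_Pythagorean) (simp add: orthogonal_def inner_commute qE[OF fE_in])
    finally have pyth: "norm z ^ 2 = c ^ 2 + norm q ^ 2" using nfgz by simp
    define s where "s = norm z"
    have cs: "c \<le> s"
    proof -
      have "c ^ 2 \<le> s ^ 2" using pyth unfolding s_def by simp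
      then show ?thesis unfolding s_def by (rule power2_le_imp_le) simp
    qed
    have s0: "0 < s" using cs gz(2) by simp
    have s1: "s \<le> 1" using zb unfolding s_def .
    show "z \<in> sph_cone (sph_join Xk Sp)"
    proof (cases "q = 0")
      case True
      then have zc: "z = c *\<^sub>R u" using fgz unfolding q_def by simp
      have "cos 0 *\<^sub>R u + sin 0 *\<^sub>R v0 \<in> sph_join Xk Sp"
        unfolding sph_join_def using u v0 by force
      then have "u \<in> sph_join Xk Sp" by simp
      moreover have "c \<le> 1" using cs s1 by simp
      ultimately show ?thesis unfolding sph_cone_def using zc gz(2) by force
    next
      case False
      then have nq: "norm q > 0" by simp
      define v where "v = (1 / norm q) *\<^sub>R q"
      have vSp: "v \<in> Sp" unfolding Sp_def v_def using nq qE by auto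
      define t where "t = arccos (c / s)"
      have cs1: "0 \<le> c / s" "c / s \<le> 1" using cs s0 gz(2) by simp_all
      have t: "t \<in> {0..pi/2}" unfolding t_def using arccos_lbound[of "c/s"] arccos_le_pi2[of "c/s"] cs1 by auto
      have cost: "cos t = c / s" unfolding t_def using cs1 by (simp add: cos_arccos)
      have s2: "s^2 = c^2 + norm q^2" using pyth unfolding s_def .
      have "1 - (c / s)^2 = (s^2 - c^2) / s^2" using s0 by (simp add: power_divide field_simps)
      also have "\<dots> = (norm q / s)^2" using s2 by (simp add: power_divide)
      finally have "1 - (c / s)^2 = (norm q / s)^2" .
      then have sint: "sin t = norm q / s"
        unfolding t_def using cs1 s0 nq by (simp add: sin_arccos)
      have "s *\<^sub>R (cos t *\<^sub>R u + sin t *\<^sub>R v) = c *\<^sub>R u + q"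
        unfolding cost sint v_def using s0 nq by (simp add: scaleR_add_right)
      also have "\<dots> = z" unfolding q_def fgz by simp
      finally have zeq: "z = s *\<^sub>R (cos t *\<^sub>R u + sin t *\<^sub>R v)" by simp
      have "cos t *\<^sub>R u + sin t *\<^sub>R v \<in> sph_join Xk Sp"
        unfolding sph_join_def using u vSp t by blast
      then show ?thesis unfolding sph_cone_def using zeq s0 s1 by force
    qed
  qed
  have mJ: "measure lebesgue (sph_cone (sph_join Xk Sp)) = measure lebesgue G"
  proof (rule measure_negligible_symdiff[OF Gm])
    have sub: "G - sph_cone (sph_join Xk Sp) \<union> (sph_cone (sph_join Xk Sp) - G) \<subseteq> {z. o' \<bullet> z = 0}"
      using J1 J2 by blast
    have "negligible {z. o' \<bullet> z = 0}" using o_ne by (intro negligible_hyperplane) simp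
    from negligible_subset[OF this sub]
    show "negligible (G - sph_cone (sph_join Xk Sp) \<union> (sph_cone (sph_join Xk Sp) - G))" .
  qed
  have hn: "open_hemisphere UNIV o' = {x. norm x = 1 \<and> 0 < x \<bullet> o'}"
    unfolding open_hemisphere_def by auto
  have gH: "g -` H = {x. 0 < x \<bullet> o'}"
    unfolding H_def using adj fob by (auto simp: inner_commute)
  have hk: "f -` open_hemisphere E o' = {x. norm x = 1 \<and> 0 < x \<bullet> ob}"
    unfolding open_hemisphere_def using fE_in f_isom iso_inner[OF f_lin f_isom] fob by auto
  have m1: "measure lebesgue (sph_cone (open_hemisphere UNIV o')) = b * rn / rk"
  proof -
    have "measure lebesgue (sph_cone (open_hemisphere UNIV o')) = measure lebesgue (pcone (open_hemisphere UNIV o') \<inter> cball 0 1)"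
      by (rule measure_sph_cone) (auto simp: hn pcone_half gH[symmetric] GHm)
    then show ?thesis by (simp add: hn pcone_half gH[symmetric] mh)
  qed
  have m2: "measure lebesgue (sph_cone (f -` open_hemisphere E o')) = b"
  proof -
    have "measure lebesgue (sph_cone (f -` open_hemisphere E o')) = measure lebesgue (pcone (f -` open_hemisphere E o') \<inter> cball 0 1)"
      by (rule measure_sph_cone) (auto simp: hk pcone_half H_def[symmetric] Hm)
    then show ?thesis by (simp add: hk pcone_half H_def[symmetric] b_def)
  qed
  have m3: "measure lebesgue (sph_cone (f -` Xk)) = a"
  proof -
    have "measure lebesgue (sph_cone Y) = measure lebesgue (pcone Y \<inter> cball 0 1)"
      by (rule measure_sph_cone[OF Ysph]) (simp add: C_def[symmetric] Cm)
    then show ?thesis by (simp add: Y_def[symmetric] C_def[symmetric] a_def)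
  qed
  have m4: "measure lebesgue (sph_cone (sph_join Xk Sp)) = a * rn / rk" using mJ mG by simp
  have dn: "real DIM('n) > 0" and dk: "real DIM('k) > 0" by simp_all
  have rr: "rn / rk > 0" using rn_pos rk_pos by simp
  show ?thesis
    unfolding sph_vol_def Sp_def[symmetric] m1 m2 m3 m4
    using dn dk rr rn_pos rk_pos by (cases "b = 0") (simp_all add: field_simps)
qed


end
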